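(* Let $d=1$, let $(X,M)$ have joint law $\mathbb{P}_{X,M}$ with $X\in\mathbb{R}$ and $M\in\{0,1\}$ ($M=0$: $X$ observed), and assume the model $\{P_\theta:\theta\in\Theta\}$ is well specified: $\mathbb{P}_X=P_{\theta^*}$ for some $\theta^*\in\Theta$. Let $\pi(x)=\mathbb{P}[M=0\mid X=x]$ and $\pi=\mathbb{P}[M=0]=\mathbb{E}_{X\sim\mathbb{P}_X}[\pi(X)]>0$, and let $$\theta_\infty^{\mathrm{ML}}\in\arg\min_{\theta\in\Theta}\mathbb{E}_{M\sim\mathbb{P}_M}\big[\mathrm{KL}(\mathbb{P}_{X\mid M}^{(M)}\,\|\,P_\theta^{(M)})\big]=\arg\min_{\theta\in\Theta}\mathrm{KL}(\mathbb{P}_{X\mid M=0}\,\|\,P_\theta).$$ Then $$ \mathrm{TV}^2\big(P_{\theta_\infty^{\mathrm{ML}}},P_{\theta^*}\big)\le 2\cdot\frac{\mathbb{V}_{X\sim\mathbb{P}_X}[\pi(X)]}{\pi^2}. $$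
   Context: $\mathbb{P}_X$ is the law of $X$ (with a Lebesgue density), $\mathbb{P}_{X\mid M=0}$ the conditional law of $X$ given $M=0$. In expectations over $M$ the empty pattern ($M=1$, i.e. $X$ missing) is excluded, which is why the middle expression reduces to the last one. $\mathrm{KL}(P_1\|P_2)=\int\log(p_1/p_2)p_1$ if $P_1\ll P_2$ and $+\infty$ otherwise; $\mathrm{TV}$ is the total variation distance. $\{P_\theta\}$ is a parametric family of distributions on $\mathbb{R}$ with Lebesgue densities. *)

theory Defs
  imports "HOL-Analysis.Analysis"
begin

definition TV_dist :: "real measure \<Rightarrow> real measure \<Rightarrow> real" where
  "TV_dist P Q = (SUP A \<in> sets borel. \<bar>measure P A - measure Q A\<bar>)"

text \<open>The integral is taken as positive part minus negative part
  (the negative part is always finite for probability densities).\<close>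
definition KL_div :: "(real \<Rightarrow> real) \<Rightarrow> (real \<Rightarrow> real) \<Rightarrow> ereal" where
  "KL_div p q =
     (if AE x in lborel. q x = 0 \<longrightarrow> p x = 0
      then enn2ereal (\<integral>\<^sup>+ x. ennreal (p x * ln (p x / q x)) \<partial>lborel)
         - enn2ereal (\<integral>\<^sup>+ x. ennreal (- (p x * ln (p x / q x))) \<partial>lborel)
      else \<infinity>)"

definition is_density :: "(real \<Rightarrow> real) \<Rightarrow> bool" where
  "is_density p \<longleftrightarrow> p \<in> borel_measurable borel \<and> (\<forall>x. 0 \<le> p x)
     \<and> (\<integral>\<^sup>+ x. ennreal (p x) \<partial>lborel) = 1"

end

theory Submission
  imports Defs
begin


lemma ln_lower: "0 < (t::real) \<Longrightarrow> 1 - 1/t \<le> ln t"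
proof -
  assume t: "0 < t"
  have "ln (1/t) \<le> 1/t - 1" using t by (intro ln_le_minus_one) simp
  moreover have "ln (1/t) = - ln t" using t by (simp add: ln_div)
  ultimately show ?thesis by simp
qed

lemma g_deriv: "0 < (t::real) \<Longrightarrow> ((\<lambda>x. (x+1) * ln x - 2*(x-1)) has_real_derivative (ln t + (t+1)/t - 2)) (at t)"
  by (auto intro!: derivative_eq_intros)

lemma g_sign1: assumes "1 \<le> (x::real)" shows "0 \<le> (x+1) * ln x - 2*(x-1)"
proof -
  have "(\<lambda>x. (x+1) * ln x - 2*(x-1)) 1 \<le> (\<lambda>x. (x+1) * ln x - 2*(x-1)) x"
  proof (rule DERIV_nonneg_imp_nondecreasing[OF assms])
    fix t :: real assume "1 \<le> t" "t \<le> x"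
    then have t: "0 < t" by simp
    have "1 - 1/t \<le> ln t" using ln_lower[OF t] .
    moreover have "(t+1)/t = 1 + 1/t" using t by (simp add: field_simps)
    ultimately show "\<exists>y. DERIV (\<lambda>x. (x+1) * ln x - 2*(x-1)) t :> y \<and> y \<ge> 0"
      using g_deriv[OF t] by (intro exI[of _ "ln t + (t+1)/t - 2"]) auto
  qed
  then show ?thesis by simp
qed

lemma g_sign2: assumes "0 < (x::real)" "x \<le> 1" shows "(x+1) * ln x - 2*(x-1) \<le> 0"
proof -
  have "(\<lambda>x. (x+1) * ln x - 2*(x-1)) x \<le> (\<lambda>x. (x+1) * ln x - 2*(x-1)) 1"
  proof (rule DERIV_nonneg_imp_nondecreasing[OF assms(2)])
    fix t :: real assume "x \<le> t" "t \<le> 1"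
    then have t: "0 < t" using assms by simp
    have "1 - 1/t \<le> ln t" using ln_lower[OF t] .
    moreover have "(t+1)/t = 1 + 1/t" using t by (simp add: field_simps)
    ultimately show "\<exists>y. DERIV (\<lambda>x. (x+1) * ln x - 2*(x-1)) t :> y \<and> y \<ge> 0"
      using g_deriv[OF t] by (intro exI[of _ "ln t + (t+1)/t - 2"]) auto
  qed
  then show ?thesis by simp
qed

lemma h_deriv: "0 < (t::real) \<Longrightarrow> ((\<lambda>x. (2*x+4)*(x * ln x - x + 1) - 3*(x-1)^2) has_real_derivative (4 * ((t+1) * ln t - 2*(t-1)))) (at t)"
  apply (rule derivative_eq_intros refl | simp)+
  apply (simp add: field_simps)
  done

lemma pinsker_x: assumes "0 \<le> (x::real)" shows "3*(x-1)^2 \<le> (2*x+4)*(x * ln x - x + 1)"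
proof (cases "x = 0")
  case True then show ?thesis by simp
next
  case False
  then have x: "0 < x" using assms by simp
  let ?h = "(\<lambda>x. (2*x+4)*(x * ln x - x + 1) - 3*(x-1)^2)"
  have "?h 1 \<le> ?h x"
  proof (cases "1 \<le> x")
    case True
    show ?thesis
    proof (rule DERIV_nonneg_imp_nondecreasing[of 1 x ?h, OF True])
      fix t :: real assume "1 \<le> t" "t \<le> x"
      then show "\<exists>y. DERIV ?h t :> y \<and> y \<ge> 0"
        using h_deriv[of t] g_sign1[of t] by (intro exI[of _ "4 * ((t+1) * ln t - 2*(t-1))"]) auto
    qed
  next
    case False
    show ?thesis
    proof (rule DERIV_nonpos_imp_nonincreasing[of x 1 ?h])
      show "x \<le> 1" using False by simp
    next
      fix t :: real assume "x \<le> t" "t \<le> 1"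
      then show "\<exists>y. DERIV ?h t :> y \<and> y \<le> 0"
        using h_deriv[of t] g_sign2[of t] x by (intro exI[of _ "4 * ((t+1) * ln t - 2*(t-1))"]) auto
    qed
  qed
  then show ?thesis by simp
qed

lemma pt_lower: assumes "0 \<le> (p::real)" "0 \<le> q" "q = 0 \<longrightarrow> p = 0"
  shows "p - q \<le> p * ln (p / q)"
proof (cases "p = 0")
  case True then show ?thesis using assms by simp
next
  case False
  then have p: "0 < p" and q: "0 < q" using assms by auto
  have "1 - q/p \<le> ln (p/q)" using ln_lower[of "p/q"] p q by simp
  then have "p * (1 - q/p) \<le> p * ln (p/q)" using p by (intro mult_left_mono) auto
  moreover have "p * (1 - q/p) = p - q" using p by (simp add: algebra_simps)
  ultimately show ?thesis by simp
qed

lemma pt_pinsker: assumes "0 \<le> (p::real)" "0 \<le> q" "q = 0 \<longrightarrow> p = 0" "0 < l"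
  shows "\<bar>p - q\<bar> \<le> l * (2*p + 4*q) / 6 + (p * ln (p / q) - p + q) / (2*l)"
proof -
  define A where "A = (2*p + 4*q) / 3"
  define F where "F = p * ln (p / q) - p + q"
  have F0: "0 \<le> F" using pt_lower[OF assms(1-3)] by (simp add: F_def)
  have A0: "0 \<le> A" using assms by (simp add: A_def)
  have key: "(p - q)^2 \<le> A * F"
  proof (cases "q = 0")
    case True then show ?thesis using assms by (simp add: A_def F_def)
  next
    case False
    then have q: "0 < q" using assms by simp
    define x where "x = p / q"
    have x0: "0 \<le> x" using assms q by (simp add: x_def)
    have px: "p = x * q" using q by (simp add: x_def)
    have "3*(x-1)^2 \<le> (2*x+4)*(x * ln x - x + 1)" by (rule pinsker_x[OF x0])
    then have "q^2 * (3*(x-1)^2) \<le> q^2 * ((2*x+4)*(x * ln x - x + 1))"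
      by (intro mult_left_mono) auto
    moreover have "q^2 * (3*(x-1)^2) = 3 * (p-q)^2" by (simp add: px power2_eq_square algebra_simps)
    moreover have "q^2 * ((2*x+4)*(x * ln x - x + 1)) = 3 * (A * F)"
      by (simp add: A_def F_def x_def[symmetric] px power2_eq_square algebra_simps)
    ultimately show ?thesis by simp
  qed
  have am: "A * F \<le> (l * A / 2 + F / (2*l))^2"
  proof -
    define a where "a = l * A / 2"
    define b where "b = F / (2*l)"
    have ab: "a * b = A * F / 4" using assms(4) by (simp add: a_def b_def)
    have "(a + b)^2 = (a - b)^2 + 4 * (a * b)" by (simp add: power2_eq_square algebra_simps)
    then have "(a + b)^2 = (a - b)^2 + A * F" using ab by simp
    then show ?thesis unfolding a_def[symmetric] b_def[symmetric] by (smt (verit) zero_le_power2)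
  qed
  have "\<bar>p - q\<bar> \<le> l * A / 2 + F / (2*l)"
  proof (rule power2_le_imp_le)
    show "\<bar>p - q\<bar>^2 \<le> (l * A / 2 + F / (2*l))^2" using key am by (simp add: power2_abs)
    show "0 \<le> l * A / 2 + F / (2*l)" using assms(4) A0 F0 by simp
  qed
  then show ?thesis by (simp add: A_def F_def)
qed

lemma am_gm_abs: "0 < (m::real) \<Longrightarrow> \<bar>a\<bar> \<le> m/2 + a^2/(2*m)"
proof -
  assume m: "0 < m"
  have "(m/2 + a^2/(2*m)) - \<bar>a\<bar> = (\<bar>a\<bar>^2 - 2*m*\<bar>a\<bar> + m^2) / (2*m)"
    using m by (simp add: diff_divide_distrib add_divide_distrib power2_eq_square)
  also have "\<dots> = (\<bar>a\<bar> - m)^2 / (2*m)" by (simp add: power2_eq_square algebra_simps)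
  finally have "(m/2 + a^2/(2*m)) - \<bar>a\<bar> = (\<bar>a\<bar> - m)^2 / (2*m)" .
  moreover have "0 \<le> (\<bar>a\<bar> - m)^2 / (2*m)" using m by simp
  ultimately show ?thesis by linarith
qed

lemma dens_facts: assumes "is_density q"
  shows "q \<in> borel_measurable lborel" "\<And>x. 0 \<le> q x" "integrable lborel q" "(\<integral>x. q x \<partial>lborel) = 1"
proof -
  show m: "q \<in> borel_measurable lborel" "\<And>x. 0 \<le> q x" using assms by (auto simp: is_density_def)
  have n: "(\<integral>\<^sup>+ x. ennreal (q x) \<partial>lborel) = 1" using assms by (auto simp: is_density_def)
  show i: "integrable lborel q" using m n by (intro integrableI_nonneg) auto
  have "ennreal (\<integral>x. q x \<partial>lborel) = 1" using nn_integral_eq_integral[OF i] m n by simp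
  then show "(\<integral>x. q x \<partial>lborel) = 1" by simp
qed

lemma measure_dens: assumes "is_density q" "A \<in> sets borel"
  shows "measure (density lborel q) A = (\<integral>x. q x * indicator A x \<partial>lborel)"
proof -
  note d = dens_facts[of q, OF assms(1)]
  have i: "integrable lborel (\<lambda>x. q x * indicator A x)"
    using d assms(2) by (intro Bochner_Integration.integrable_bound[OF d(3)]) (auto simp: indicator_def)
  have "emeasure (density lborel q) A = (\<integral>\<^sup>+ x. ennreal (q x * indicator A x) \<partial>lborel)"
    using d assms(2) by (subst emeasure_density) (auto intro!: nn_integral_cong simp: indicator_def)
  also have "\<dots> = ennreal (\<integral>x. q x * indicator A x \<partial>lborel)"
    using i d by (intro nn_integral_eq_integral) auto
  finally show ?thesis unfolding measure_def using d assms(2)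
    by (simp add: integral_nonneg indicator_def)
qed

lemma KL_eq: assumes i: "integrable lborel (\<lambda>x. p x * ln (p x / q x))"
    and ae: "AE x in lborel. q x = 0 \<longrightarrow> p x = 0"
  shows "KL_div p q = ereal (\<integral>x. p x * ln (p x / q x) \<partial>lborel)"
proof -
  let ?P = "\<integral>\<^sup>+ x. ennreal (p x * ln (p x / q x)) \<partial>lborel"
  let ?N = "\<integral>\<^sup>+ x. ennreal (- (p x * ln (p x / q x))) \<partial>lborel"
  have fin: "?P \<noteq> \<infinity>" "?N \<noteq> \<infinity>" using i unfolding real_integrable_def by auto
  have e: "(\<integral>x. p x * ln (p x / q x) \<partial>lborel) = enn2real ?P - enn2real ?N"
    by (rule real_lebesgue_integral_def[OF i])
  have "enn2ereal ?P = ereal (enn2real ?P)" "enn2ereal ?N = ereal (enn2real ?N)"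
    using fin by (auto simp: ennreal_enn2real_if enn2ereal_ennreal[symmetric] top.not_eq_extremum
        simp del: enn2ereal_ennreal)
  then show ?thesis unfolding KL_div_def using ae e by simp
qed

lemma KL_fin:
  assumes pm: "p \<in> borel_measurable lborel" and qm: "q \<in> borel_measurable lborel"
    and p0: "\<And>x. 0 \<le> p x" and q0: "\<And>x. 0 \<le> q x" and qi: "integrable lborel q"
    and K: "KL_div p q \<le> ereal B"
  shows "AE x in lborel. q x = 0 \<longrightarrow> p x = 0"
    and "integrable lborel (\<lambda>x. p x * ln (p x / q x))"
    and "(\<integral>x. p x * ln (p x / q x) \<partial>lborel) \<le> B"
proof -
  show ae: "AE x in lborel. q x = 0 \<longrightarrow> p x = 0"
  proof (rule ccontr)
    assume "\<not> ?thesis"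
    then have "KL_div p q = \<infinity>" unfolding KL_div_def by simp
    then show False using K by simp
  qed
  let ?h = "\<lambda>x. p x * ln (p x / q x)"
  let ?P = "\<integral>\<^sup>+ x. ennreal (?h x) \<partial>lborel"
  let ?N = "\<integral>\<^sup>+ x. ennreal (- ?h x) \<partial>lborel"
  have hm: "?h \<in> borel_measurable lborel" using pm qm by measurable
  have "?N \<le> (\<integral>\<^sup>+ x. ennreal (q x) \<partial>lborel)"
  proof (rule nn_integral_mono_AE)
    show "AE x in lborel. ennreal (- ?h x) \<le> ennreal (q x)"
      using ae
    proof eventually_elim
      case (elim x)
      then have "p x - q x \<le> ?h x" using pt_lower[of "p x" "q x"] p0 q0 by auto
      then show ?case using p0[of x] by (intro ennreal_leI) auto
    qed
  qed
  also have "\<dots> < \<infinity>" using qi q0 by (simp add: nn_integral_eq_integral)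
  finally have Nf: "?N \<noteq> \<infinity>" by simp
  have KL: "KL_div p q = enn2ereal ?P - enn2ereal ?N" unfolding KL_div_def using ae by simp
  have Pf: "?P \<noteq> \<infinity>"
  proof
    assume "?P = \<infinity>"
    then have "KL_div p q = \<infinity>" using KL Nf by (simp add: enn2ereal_top)
    then show False using K by simp
  qed
  show i: "integrable lborel ?h" unfolding real_integrable_def using hm Pf Nf by simp
  have "ereal (\<integral>x. ?h x \<partial>lborel) \<le> ereal B" using KL_eq[OF i ae] K by simp
  then show "(\<integral>x. ?h x \<partial>lborel) \<le> B" by simp
qed

lemma half_abs: "\<bar>2 * (x::real)\<bar> \<le> 5/2 * s \<Longrightarrow> \<bar>x\<bar> \<le> 5/4 * s"
  by (simp add: abs_mult)

lemma main_lemma: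
  fixes g q \<pi> :: "real \<Rightarrow> real" and c :: real
  assumes dg: "is_density g" and dq: "is_density q"
    and \<pi>m: "\<pi> \<in> borel_measurable borel" and \<pi>r: "\<And>x. 0 \<le> \<pi> x \<and> \<pi> x \<le> 1"
    and c: "c = (\<integral>y. \<pi> y * g y \<partial>lborel)" and cpos: "0 < c"
    and K: "KL_div (\<lambda>x. \<pi> x * g x / c) q \<le> KL_div (\<lambda>x. \<pi> x * g x / c) g"
  shows "(TV_dist (density lborel q) (density lborel g))\<^sup>2
         \<le> 2 * (\<integral>x. (\<pi> x - c)\<^sup>2 * g x \<partial>lborel) / c\<^sup>2"
proof -
  note G = dens_facts[of g, OF dg]
  note Q = dens_facts[of q, OF dq]
  have \<pi>m': "\<pi> \<in> borel_measurable lborel" using \<pi>m by simp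
  define p where "p = (\<lambda>x. \<pi> x * g x / c)"
  define V where "V = (\<integral>x. (\<pi> x - c)\<^sup>2 * g x \<partial>lborel)"
  have pm: "p \<in> borel_measurable lborel" unfolding p_def using \<pi>m' G(1) by measurable
  have p0: "\<And>x. 0 \<le> p x" unfolding p_def using \<pi>r G(2) cpos by simp
  have ipg: "integrable lborel (\<lambda>x. \<pi> x * g x)"
  proof (rule Bochner_Integration.integrable_bound[OF G(3)])
    show "(\<lambda>x. \<pi> x * g x) \<in> borel_measurable lborel" using \<pi>m' G(1) by measurable
    show "AE x in lborel. norm (\<pi> x * g x) \<le> norm (g x)"
    proof (rule AE_I2)
      fix x
      show "norm (\<pi> x * g x) \<le> norm (g x)" using G(2)[of x] \<pi>r[of x]
        by (simp add: abs_mult mult_left_le_one_le)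
    qed
  qed
  have ip2g: "integrable lborel (\<lambda>x. (\<pi> x)\<^sup>2 * g x)"
  proof (rule Bochner_Integration.integrable_bound[OF G(3)])
    show "(\<lambda>x. (\<pi> x)\<^sup>2 * g x) \<in> borel_measurable lborel" using \<pi>m' G(1) by measurable
    show "AE x in lborel. norm ((\<pi> x)\<^sup>2 * g x) \<le> norm (g x)"
    proof (rule AE_I2)
      fix x
      have "(\<pi> x)\<^sup>2 \<le> 1" using \<pi>r[of x] by (simp add: power_le_one)
      then show "norm ((\<pi> x)\<^sup>2 * g x) \<le> norm (g x)" using G(2)[of x]
        by (simp add: abs_mult mult_left_le_one_le)
    qed
  qed
  have ip: "integrable lborel p" unfolding p_def using ipg by simp
  have intp: "(\<integral>x. p x \<partial>lborel) = 1" unfolding p_def using c cpos by simp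
  have eqV: "(\<lambda>x. (\<pi> x - c)\<^sup>2 * g x) = (\<lambda>x. ((\<pi> x)\<^sup>2 * g x - (2*c) * (\<pi> x * g x)) + c\<^sup>2 * g x)"
    by (auto simp: power2_eq_square algebra_simps)
  have iV: "integrable lborel (\<lambda>x. (\<pi> x - c)\<^sup>2 * g x)"
    unfolding eqV using ip2g ipg G(3) by auto
  have Vexp: "V = (\<integral>x. (\<pi> x)\<^sup>2 * g x \<partial>lborel) - c\<^sup>2"
    unfolding V_def eqV using ip2g ipg G(3) G(4) c[symmetric] by (simp add: power2_eq_square)
  have V0: "0 \<le> V" unfolding V_def using G(2) by (intro integral_nonneg_AE AE_I2) simp
  define hg where "hg = (\<lambda>x. p x * ln (p x / g x))"
  define u where "u = (\<lambda>x. (\<pi> x)\<^sup>2 * g x / c\<^sup>2 - \<pi> x * g x / c)"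
  have hgm: "hg \<in> borel_measurable lborel" unfolding hg_def using pm G(1) by measurable
  have iu: "integrable lborel u" unfolding u_def using ip2g ipg by auto
  have up: "hg x \<le> u x" for x
  proof (cases "g x = 0 \<or> \<pi> x = 0")
    case True then show ?thesis by (auto simp: hg_def u_def p_def)
  next
    case False
    then have gx: "0 < g x" and px: "0 < \<pi> x" using G(2)[of x] \<pi>r[of x] by auto
    have r: "p x / g x = \<pi> x / c" using gx by (simp add: p_def)
    have "ln (\<pi> x / c) \<le> \<pi> x / c - 1" using px cpos by (intro ln_le_minus_one) simp
    then have "p x * ln (\<pi> x / c) \<le> p x * (\<pi> x / c - 1)" using p0[of x] by (rule mult_left_mono)
    moreover have "p x * (\<pi> x / c - 1) = u x" using cpos by (simp add: p_def u_def power2_eq_square field_simps)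
    ultimately show ?thesis by (simp add: hg_def r)
  qed
  have lo: "p x - g x \<le> hg x" for x
    unfolding hg_def using pt_lower[of "p x" "g x"] p0 G(2) by (auto simp: p_def)
  have ihg: "integrable lborel hg"
  proof (rule Bochner_Integration.integrable_bound)
    show "integrable lborel (\<lambda>x. \<bar>p x - g x\<bar> + \<bar>u x\<bar>)" using ip G(3) iu by auto
    show "hg \<in> borel_measurable lborel" by (rule hgm)
    show "AE x in lborel. norm (hg x) \<le> norm (\<bar>p x - g x\<bar> + \<bar>u x\<bar>)"
      using up lo by (intro AE_I2) (smt (verit) real_norm_def)
  qed
  have "(\<integral>x. hg x \<partial>lborel) \<le> (\<integral>x. u x \<partial>lborel)" using ihg iu up by (intro integral_mono) auto
  also have "(\<integral>x. u x \<partial>lborel) = V / c\<^sup>2"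
    unfolding u_def using ip2g ipg cpos c[symmetric] Vexp by (simp add: field_simps power2_eq_square)
  finally have hgV: "(\<integral>x. hg x \<partial>lborel) \<le> V / c\<^sup>2" .
  have KLg: "KL_div p g = ereal (\<integral>x. hg x \<partial>lborel)"
    unfolding hg_def by (rule KL_eq) (use ihg in \<open>auto simp: hg_def p_def\<close>)
  have Kq: "KL_div p q \<le> ereal (V / c\<^sup>2)" using K KLg hgV unfolding p_def[symmetric] by (simp add: order_trans)
  define hq where "hq = (\<lambda>x. p x * ln (p x / q x))"
  note KF = KL_fin[OF pm Q(1) p0 Q(2) Q(3) Kq, folded hq_def]
  have L1a: "(\<integral>x. \<bar>p x - q x\<bar> \<partial>lborel) \<le> l + (V / c\<^sup>2) / (2*l)" if l: "0 < l" for l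
  proof -
    let ?R = "\<lambda>x. l * (2 * p x + 4 * q x) / 6 + (hq x - p x + q x) / (2*l)"
    have hb: "has_bochner_integral lborel ?R (l * (2 * 1 + 4 * 1) / 6 + ((\<integral>x. hq x \<partial>lborel) - 1 + 1) / (2*l))"
      using ip Q(3) KF(2) intp Q(4)
      by (intro has_bochner_integral_add has_bochner_integral_diff has_bochner_integral_divide_zero
          has_bochner_integral_mult_right) (auto dest: has_bochner_integral_integrable)
    have "(\<integral>x. \<bar>p x - q x\<bar> \<partial>lborel) \<le> (\<integral>x. ?R x \<partial>lborel)"
    proof (rule integral_mono_AE)
      show "integrable lborel (\<lambda>x. \<bar>p x - q x\<bar>)" using ip Q(3) by auto
      show "integrable lborel ?R" using hb by (rule integrable.intros)
      show "AE x in lborel. \<bar>p x - q x\<bar> \<le> ?R x" using KF(1)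
        by eventually_elim (use pt_pinsker p0 Q(2) l in \<open>auto simp: hq_def\<close>)
    qed
    also have "(\<integral>x. ?R x \<partial>lborel) = l + (\<integral>x. hq x \<partial>lborel) / (2*l)"
      using has_bochner_integral_integral_eq[OF hb] by simp
    also have "\<dots> \<le> l + (V / c\<^sup>2) / (2*l)" using divide_right_mono[OF KF(3), of "2*l"] l by simp
    finally show ?thesis .
  qed
  have L1b: "(\<integral>x. \<bar>p x - g x\<bar> \<partial>lborel) \<le> m / 2 + (V / c\<^sup>2) / (2*m)" if m: "0 < m" for m
  proof -
    let ?R = "\<lambda>x. m / 2 * g x + (\<pi> x - c)\<^sup>2 * g x / (2*m*c\<^sup>2)"
    have hb: "has_bochner_integral lborel ?R (m / 2 * 1 + V / (2*m*c\<^sup>2))"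
      using G(3) G(4) iV unfolding V_def
      by (intro has_bochner_integral_add has_bochner_integral_divide_zero
          has_bochner_integral_mult_right) (auto dest: has_bochner_integral_integrable)
    have "(\<integral>x. \<bar>p x - g x\<bar> \<partial>lborel) \<le> (\<integral>x. ?R x \<partial>lborel)"
    proof (rule integral_mono)
      show "integrable lborel (\<lambda>x. \<bar>p x - g x\<bar>)" using ip G(3) by auto
      show "integrable lborel ?R" using hb by (rule integrable.intros)
      fix x
      have "p x - g x = g x * ((\<pi> x - c) / c)" using cpos by (simp add: p_def field_simps)
      then have e: "\<bar>p x - g x\<bar> = g x * \<bar>(\<pi> x - c) / c\<bar>"
        using G(2)[of x] by (simp add: abs_mult)
      have "\<bar>(\<pi> x - c) / c\<bar> \<le> m/2 + ((\<pi> x - c) / c)\<^sup>2 / (2*m)" by (rule am_gm_abs[OF m])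
      then have "g x * \<bar>(\<pi> x - c) / c\<bar> \<le> g x * (m/2 + ((\<pi> x - c) / c)\<^sup>2 / (2*m))"
        using G(2)[of x] by (rule mult_left_mono)
      also have "\<dots> = ?R x" using cpos m by (simp add: power_divide field_simps)
      finally show "\<bar>p x - g x\<bar> \<le> ?R x" using e by simp
    qed
    also have "(\<integral>x. ?R x \<partial>lborel) = m / 2 + (V / c\<^sup>2) / (2*m)"
      using has_bochner_integral_integral_eq[OF hb] by simp
    finally show ?thesis .
  qed
  have L1c: "(\<integral>x. \<bar>q x - g x\<bar> \<partial>lborel) \<le> (\<integral>x. \<bar>p x - q x\<bar> \<partial>lborel) + (\<integral>x. \<bar>p x - g x\<bar> \<partial>lborel)"
  proof -
    have "(\<integral>x. \<bar>q x - g x\<bar> \<partial>lborel) \<le> (\<integral>x. \<bar>p x - q x\<bar> + \<bar>p x - g x\<bar> \<partial>lborel)"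
      using ip Q(3) G(3) by (intro integral_mono) auto
    also have "\<dots> = (\<integral>x. \<bar>p x - q x\<bar> \<partial>lborel) + (\<integral>x. \<bar>p x - g x\<bar> \<partial>lborel)"
      using ip Q(3) G(3) by (subst Bochner_Integration.integral_add) auto
    finally show ?thesis .
  qed
  define s where "s = sqrt V / c"
  have s0: "0 \<le> s" unfolding s_def using V0 cpos by simp
  have s2: "s\<^sup>2 = V / c\<^sup>2" unfolding s_def using V0 by (simp add: power_divide)
  have L1: "(\<integral>x. \<bar>q x - g x\<bar> \<partial>lborel) \<le> 5/2 * s"
  proof (rule field_le_epsilon)
    fix e :: real assume e: "0 < e"
    define t where "t = s + 2/5 * e"
    have t: "0 < t" "s \<le> t" using s0 e by (auto simp: t_def)
    have st: "s\<^sup>2 / (2*t) \<le> t / 2"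
    proof -
      have "s\<^sup>2 \<le> t\<^sup>2" using t s0 by (intro power_mono) auto
      then show ?thesis using t by (simp add: field_simps power2_eq_square)
    qed
    have "(\<integral>x. \<bar>q x - g x\<bar> \<partial>lborel) \<le> (t + s\<^sup>2 / (2*t)) + (t/2 + s\<^sup>2/(2*t))"
      using L1c L1a[OF t(1), folded s2] L1b[OF t(1), folded s2] by linarith
    also have "\<dots> \<le> 5/2 * t" using st by linarith
    finally show "(\<integral>x. \<bar>q x - g x\<bar> \<partial>lborel) \<le> 5/2 * s + e" by (simp add: t_def algebra_simps)
  qed
  have TVA: "\<bar>measure (density lborel q) A - measure (density lborel g) A\<bar> \<le> 5/4 * s"
    if A: "A \<in> sets borel" for A
  proof -
    have iqA: "integrable lborel (\<lambda>x. q x * indicator A x)"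
      using Q A by (intro Bochner_Integration.integrable_bound[OF Q(3)]) (auto simp: indicator_def)
    have igA: "integrable lborel (\<lambda>x. g x * indicator A x)"
      using G A by (intro Bochner_Integration.integrable_bound[OF G(3)]) (auto simp: indicator_def)
    let ?d = "measure (density lborel q) A - measure (density lborel g) A"
    have hb: "has_bochner_integral lborel (\<lambda>x. 2 * (q x * indicator A x) - 2 * (g x * indicator A x) - (q x - g x))
       (2 * (\<integral>x. q x * indicator A x \<partial>lborel) - 2 * (\<integral>x. g x * indicator A x \<partial>lborel) - (1 - 1))"
      using iqA igA Q(3,4) G(3,4)
      by (intro has_bochner_integral_diff has_bochner_integral_mult_right)
         (auto dest: has_bochner_integral_integrable)
    have "2 * ?d = (\<integral>x. 2 * (q x * indicator A x) - 2 * (g x * indicator A x) - (q x - g x) \<partial>lborel)"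
      unfolding has_bochner_integral_integral_eq[OF hb] measure_dens[OF dq A] measure_dens[OF dg A]
      by simp
    also have "\<dots> = (\<integral>x. (q x - g x) * (2 * indicator A x - 1) \<partial>lborel)"
      by (intro Bochner_Integration.integral_cong) (auto simp: algebra_simps)
    finally have d: "2 * ?d = (\<integral>x. (q x - g x) * (2 * indicator A x - 1) \<partial>lborel)" .
    have "\<bar>\<integral>x. (q x - g x) * (2 * indicator A x - 1) \<partial>lborel\<bar> \<le> (\<integral>x. \<bar>q x - g x\<bar> \<partial>lborel)"
    proof (rule integral_abs_bound_integral)
      have one: "\<bar>(q x - g x) * (2 * indicator A x - 1)\<bar> = \<bar>q x - g x\<bar>" for x
      proof -
        have "\<bar>2 * indicator A x - 1 :: real\<bar> = 1" by (cases "x \<in> A") auto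
        then show ?thesis by (simp add: abs_mult)
      qed
      have iqg: "integrable lborel (\<lambda>x. \<bar>q x - g x\<bar>)" using Q(3) G(3) by auto
      show "integrable lborel (\<lambda>x. (q x - g x) * (2 * indicator A x - 1))"
      proof (rule Bochner_Integration.integrable_bound[OF iqg])
        have "A \<in> sets lborel" using A by simp
        then show "(\<lambda>x. (q x - g x) * (2 * indicator A x - 1)) \<in> borel_measurable lborel"
          using Q(1) G(1) by measurable
        show "AE x in lborel. norm ((q x - g x) * (2 * indicator A x - 1)) \<le> norm \<bar>q x - g x\<bar>"
          by (intro AE_I2) (simp only: real_norm_def one abs_abs order_refl)
      qed
      show "integrable lborel (\<lambda>x. \<bar>q x - g x\<bar>)" by (rule iqg)
      show "\<And>x. x \<in> space lborel \<Longrightarrow> \<bar>(q x - g x) * (2 * indicator A x - 1)\<bar> \<le> \<bar>q x - g x\<bar>"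
        by (simp only: one order_refl)
    qed
    then have "\<bar>2 * ?d\<bar> \<le> 5/2 * s" unfolding d[symmetric] using L1 by linarith
    then show ?thesis by (rule half_abs)
  qed
  let ?T = "TV_dist (density lborel q) (density lborel g)"
  have bdd: "bdd_above ((\<lambda>A. \<bar>measure (density lborel q) A - measure (density lborel g) A\<bar>) ` sets borel)"
    using TVA by (intro bdd_aboveI2[where M="5/4 * s"]) auto
  have T1: "?T \<le> 5/4 * s" unfolding TV_dist_def
    using TVA by (intro cSUP_least) auto
  have T0: "0 \<le> ?T" unfolding TV_dist_def
    using cSUP_upper[OF _ bdd, of "{}"] by simp
  have "?T\<^sup>2 \<le> (5/4 * s)\<^sup>2" using T0 T1 by (intro power_mono) auto
  also have "\<dots> = 25/16 * (V / c\<^sup>2)" by (simp only: power_mult_distrib s2[symmetric]) (simp add: power2_eq_square)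
  also have "\<dots> \<le> 2 * V / c\<^sup>2" using V0 cpos by (simp add: field_simps)
  finally show ?thesis unfolding V_def .
qed


theorem theorem5:
  fixes f :: "'p \<Rightarrow> real \<Rightarrow> real"   \<comment> \<open>density of the model P_theta\<close>
    and \<Theta> :: "'p set"
    and \<theta>s \<theta>inf :: 'p
    and \<pi> :: "real \<Rightarrow> real"          \<comment> \<open>pi(x) = P[M = 0 | X = x]\<close>
  assumes dens: "\<And>\<theta>. \<theta> \<in> \<Theta> \<Longrightarrow> is_density (f \<theta>)"
    and \<theta>s: "\<theta>s \<in> \<Theta>"                 \<comment> \<open>well specified: P_X = P_theta*\<close>
    and \<pi>_meas: "\<pi> \<in> borel_measurable borel"
    and \<pi>_range: "\<And>x. 0 \<le> \<pi> x \<and> \<pi> x \<le> 1"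
    and \<pi>_pos: "(\<integral>x. \<pi> x * f \<theta>s x \<partial>lborel) > 0"
    and \<theta>inf: "\<theta>inf \<in> \<Theta>"
    and argmin: "\<And>\<theta>. \<theta> \<in> \<Theta> \<Longrightarrow>
        KL_div (\<lambda>x. \<pi> x * f \<theta>s x / (\<integral>y. \<pi> y * f \<theta>s y \<partial>lborel)) (f \<theta>inf)
        \<le> KL_div (\<lambda>x. \<pi> x * f \<theta>s x / (\<integral>y. \<pi> y * f \<theta>s y \<partial>lborel)) (f \<theta>)"
  shows "(TV_dist (density lborel (f \<theta>inf)) (density lborel (f \<theta>s)))\<^sup>2
         \<le> 2 * (\<integral>x. (\<pi> x - (\<integral>y. \<pi> y * f \<theta>s y \<partial>lborel))\<^sup>2 * f \<theta>s x \<partial>lborel)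
             / (\<integral>y. \<pi> y * f \<theta>s y \<partial>lborel)\<^sup>2"
    using main_lemma[OF dens[OF \<theta>s] dens[OF \<theta>inf] \<pi>_meas \<pi>_range refl \<pi>_pos argmin[OF \<theta>s]] .

end
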